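(* Let $k\in\mathbb{N}$ with $6\mid k$, let $h$ be an integer with $\gcd(h,k)=1$, and let $h'$ be an integer with $hh'\equiv-1\pmod{36k}$. Then $$\frac{\omega_{h,\frac{k}{6}}\,\omega_{h,\frac{k}{2}}\, \omega_{h,k}}{\omega_{h, \frac{k}{3}}}= \exp\!\left(-\frac{2\pi i}{36k} \left(18k + h\left(-9-9k-4k^2\right) + h' \left(9-2k^2 \right) \right)\right)$$ and $$\frac{\omega_{h,\frac{k}{3}}\,\omega_{h,\frac{k}{2}}\,\omega_{h,k}}{\omega_{h,\frac{k}{6}}^3} =\exp\!\left(- \frac{2\pi i}{18k} \left(h \left(9-2k^2 \right) + h'\left(-9-k^2 \right) \right)\right).$$
   Context: For coprime integers $h$ and $K\ge1$, $\omega_{h,K}=\exp(\pi i\, s(h,K))$, where $s(h,K)=\sum_{r=1}^{K-1}\frac{r}{K}\left(\frac{hr}{K}-\lfloor \frac{hr}{K}\rfloor-\frac12\right)$ is the Dedekind sum. Equivalently, with $\tilde h$ any integer satisfying $h\tilde h\equiv-1\pmod K$ and $\left(\frac{\cdot}{\cdot}\right)$ the Kronecker symbol: $\omega_{h,K}=\left(\frac{-K}{h}\right)\exp\!\left(-\pi i\left(\frac14(2-hK-h)+\frac1{12}(K-\frac1K)(2h-\tilde h+h^2\tilde h)\right)\right)$ if $h$ is odd, and $\omega_{h,K}=\left(\frac{-h}{K}\right)\exp\!\left(-\pi i\left(\frac14(K-1)+\frac1{12}(K-\frac1K)(2h-\tilde h+h^2\tilde h)\right)\right)$ if $K$ is odd.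 *)

theory Defs
  imports "HOL-Number_Theory.Number_Theory" "HOL-Analysis.Analysis"
begin

definition dedekind_sum :: "int \<Rightarrow> int \<Rightarrow> real" where
  "dedekind_sum h K = (\<Sum>r\<in>{1..K-1}. (of_int r / of_int K) *
      (of_int (h*r) / of_int K - of_int \<lfloor>of_int (h*r) / (of_int K :: real)\<rfloor> - 1/2))"

definition omega :: "int \<Rightarrow> int \<Rightarrow> complex" where
  "omega h K = exp (of_real pi * \<i> * of_real (dedekind_sum h K))"

end

theory Submission
  imports Defs
begin

definition T :: "int \<Rightarrow> int \<Rightarrow> int" where
  "T a n = (\<Sum>r\<in>{1..n-1}. r * (a * r div n))"

lemma sum_id_int: "0 \<le> N \<Longrightarrow> 2 * (\<Sum>r\<in>{1..N}. r) = N * (N + 1::int)"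
proof (induct N rule: int_ge_induct)
  case base then show ?case by simp
next
  case (step i)
  have "{1..i+1} = insert (i+1) {1..i}" using step by (auto)
  then show ?case using step by (simp add: algebra_simps)
qed

lemma sum_sq_int: "0 \<le> N \<Longrightarrow> 6 * (\<Sum>r\<in>{1..N}. r^2) = N * (N + 1) * (2*N+1::int)"
proof (induct N rule: int_ge_induct)
  case base then show ?case by simp
next
  case (step i)
  have "{1..i+1} = insert (i+1) {1..i}" using step by (auto)
  then show ?case using step by (simp add: algebra_simps power2_eq_square)
qed

lemma T_formula:
  assumes "n > 0"
  shows "12 * of_int n * dedekind_sum a n = of_int (2*a*(n-1)*(2*n-1) - 12*T a n - 3*n*(n-1))"
proof -
  have n0: "real_of_int n \<noteq> 0" using assms by simp
  have "of_int n * (12 * of_int n * dedekind_sum a n)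
      = (\<Sum>r\<in>{1..n-1}. real_of_int (12*a*r^2 - 12*n*(r*(a*r div n)) - 6*n*r))"
    unfolding dedekind_sum_def sum_distrib_left floor_divide_of_int_eq
    by (rule sum.cong) (use n0 in \<open>auto simp: field_simps power2_eq_square\<close>)
  also have "\<dots> = of_int (12*a*(\<Sum>r\<in>{1..n-1}. r^2) - 12*n*T a n - 6*n*(\<Sum>r\<in>{1..n-1}. r))"
    unfolding T_def by (simp add: sum_subtractf sum_distrib_left of_int_sum)
  also have "\<dots> = of_int (n * (2*a*(n-1)*(2*n-1) - 12*T a n - 3*n*(n-1)))"
  proof -
    have f1: "6 * (\<Sum>r\<in>{1..n-1}. r^2) = (n-1)*n*(2*n-1)" using sum_sq_int[of "n-1"] assms by (simp add: algebra_simps)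
    have f2: "2 * (\<Sum>r\<in>{1..n-1}. r) = (n-1)*n" using sum_id_int[of "n-1"] assms by (simp add: algebra_simps)
    have "12*a*(\<Sum>r\<in>{1..n-1}. r^2) - 12*n*T a n - 6*n*(\<Sum>r\<in>{1..n-1}. r)
       = 2*a*(6 * (\<Sum>r\<in>{1..n-1}. r^2)) - 12*n*T a n - 3*n*(2 * (\<Sum>r\<in>{1..n-1}. r))" by (simp add: algebra_simps)
    also have "\<dots> = 2*a*((n-1)*n*(2*n-1)) - 12*n*T a n - 3*n*((n-1)*n)" by (simp only: f1 f2)
    also have "\<dots> = n * (2*a*(n-1)*(2*n-1) - 12*T a n - 3*n*(n-1))" by (simp add: algebra_simps)
    finally have "12*a*(\<Sum>r\<in>{1..n-1}. r^2) - 12*n*T a n - 6*n*(\<Sum>r\<in>{1..n-1}. r) = n * (2*a*(n-1)*(2*n-1) - 12*T a n - 3*n*(n-1))" .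
    then show ?thesis by (simp only:)
  qed
  finally have "of_int n * (12 * of_int n * dedekind_sum a n) = of_int n * of_int (2*a*(n-1)*(2*n-1) - 12*T a n - 3*n*(n-1))"
    by (simp only: of_int_mult)
  then show ?thesis using n0 by (metis mult_cancel_left)
qed

lemma ds_periodic:
  assumes "n > 0"
  shows "dedekind_sum (a + n*t) n = dedekind_sum a n"
  unfolding dedekind_sum_def floor_divide_of_int_eq
proof (rule sum.cong)
  fix r assume "r \<in> {1..n-1}"
  have "(a + n*t) * r div n = a*r div n + t*r" using assms
    by (simp add: algebra_simps)
  then show "real_of_int r / real_of_int n * (real_of_int ((a + n * t) * r) / real_of_int n -
         real_of_int ((a + n * t) * r div n) - 1 / 2) =
         real_of_int r / real_of_int n * (real_of_int (a * r) / real_of_int n - real_of_int (a * r div n) - 1 / 2)"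
    using assms by (simp add: field_simps)
qed simp

lemma dvdlem: "n dvd a*r \<Longrightarrow> coprime a (n::int) \<Longrightarrow> n dvd r"
  by (metis coprime_dvd_mult_right_iff coprime_commute)
lemma conglem: "[a*x = a*y] (mod n) \<Longrightarrow> coprime a (n::int) \<Longrightarrow> [x = y] (mod n)"
  by (metis cong_mult_lcancel)
lemma mult_mod_bij:
  fixes a n :: int
  assumes "n > 0" "coprime a n"
  shows "bij_betw (\<lambda>r. a*r mod n) {1..n-1} {1..n-1}"
proof -
  have sub: "(\<lambda>r. a*r mod n) ` {1..n-1} \<subseteq> {1..n-1}"
  proof
    fix y assume "y \<in> (\<lambda>r. a*r mod n) ` {1..n-1}"
    then obtain r where r: "r \<in> {1..n-1}" "y = a*r mod n" by auto
    have "\<not> n dvd a*r"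
    proof
      assume "n dvd a*r"
      then have "n dvd r" using assms(2) by (metis dvdlem)
      then show False using r(1) zdvd_imp_le[of n r] by auto
    qed
    then have "y \<noteq> 0" using r by (simp add: dvd_eq_mod_eq_0)
    moreover have "0 \<le> y" "y < n" using r assms by auto
    ultimately show "y \<in> {1..n-1}" by auto
  qed
  have inj: "inj_on (\<lambda>r. a*r mod n) {1..n-1}"
  proof
    fix x y assume xy: "x \<in> {1..n-1}" "y \<in> {1..n-1}" "a*x mod n = a*y mod n"
    have "[a*x = a*y] (mod n)" unfolding Cong.cong_def by (rule xy(3))
    then have "[x = y] (mod n)" using assms(2) by (metis conglem)
    then show "x = y" using xy by (simp add: Cong.cong_def)
  qed
  show ?thesis using endo_inj_surj[OF _ sub inj] inj by (simp add: bij_betw_def)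
qed
lemma notdvd_coprime:
  fixes a n r :: int
  assumes "n > 0" "coprime a n" "r \<in> {1..n-1}"
  shows "\<not> n dvd a*r"
proof
  assume "n dvd a*r"
  then have "n dvd r" using assms(2) by (metis dvdlem)
  then show False using assms(3) zdvd_imp_le[of n r] by auto
qed

lemma pair_floor:
  fixes a n :: int
  assumes "n > 0" "coprime a n"
  shows "2 * (\<Sum>r\<in>{1..n-1}. a*r div n) = (a-1)*(n-1)"
proof -
  have "(\<Sum>r\<in>{1..n-1}. a*r div n) = (\<Sum>r\<in>{1..n-1}. a*(n-r) div n)"
    by (rule sum.reindex_bij_witness[of _ "\<lambda>r. n-r" "\<lambda>r. n-r"]) auto
  then have "2 * (\<Sum>r\<in>{1..n-1}. a*r div n) = (\<Sum>r\<in>{1..n-1}. a*r div n + a*(n-r) div n)"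
    by (simp add: sum.distrib)
  also have "\<dots> = (\<Sum>r\<in>{1..n-1}. a - 1)"
  proof (rule sum.cong)
    fix r assume r: "r \<in> {1..n-1}"
    have nd: "(a*r) mod n \<noteq> 0" using notdvd_coprime[OF assms r] by (simp add: dvd_eq_mod_eq_0)
    have "a*(n-r) = - (a*r) + n*a" by (simp add: algebra_simps)
    then have "a*(n-r) div n = (- (a*r) + n*a) div n" by (simp only:)
    also have "\<dots> = a + (- (a*r)) div n" using assms(1) by (subst div_mult_self2) auto
    also have "a + (- (a*r)) div n = a - (a*r) div n - 1" using nd assms(1) by (simp add: zdiv_zminus1_eq_if)
    finally show "a*r div n + a*(n-r) div n = a - 1" by simp
  qed simp
  also have "\<dots> = (a-1)*(n-1)" using assms(1) by simp
  finally show ?thesis .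
qed

lemma div_lt_iff: "0 < (n::int) \<Longrightarrow> (x div n < s) = (x < n * s)"
proof -
  assume n: "0 < n"
  have e: "x = n * (x div n) + x mod n" by simp
  have m: "0 \<le> x mod n" "x mod n < n" using n by auto
  show ?thesis
  proof
    assume "x div n < s"
    then have "x div n + 1 \<le> s" by simp
    then have "n * (x div n + 1) \<le> n * s" using n by (simp add: mult_left_mono)
    then have "n + n * (x div n) \<le> n * s" by (simp add: algebra_simps)
    then show "x < n * s" using e m by linarith
  next
    assume a: "x < n * s"
    show "x div n < s"
    proof (rule ccontr)
      assume "\<not> x div n < s"
      then have "n * s \<le> n * (x div n)" using n by (simp add: mult_left_mono)
      then show False using a e m by linarith
    qed
  qed
qed
lemma count_lemma:
  fixes a n s :: int
  assumes "a > 0" "n > 0" "coprime a n" "s \<in> {1..a-1}"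
  shows "n * s div a = (\<Sum>r\<in>{1..n-1}. if a*r < n * s then 1 else 0)"
proof -
  have cp: "coprime n a" using assms(3) by (simp add: coprime_commute)
  have nd: "\<not> a dvd n * s"
  proof
    assume "a dvd n * s"
    then have "a dvd s" using dvdlem[of a n s] cp by simp
    then show False using assms(4) zdvd_imp_le[of a s] by auto
  qed
  have lt: "n * s div a < n"
    using assms by (simp add: div_lt_iff)
  have ge: "0 \<le> n * s div a" using assms by (simp add: pos_imp_zdiv_nonneg_iff)
  have key: "a*r < n * s \<longleftrightarrow> r \<le> n * s div a" for r
  proof -
    have "r \<le> n * s div a \<longleftrightarrow> \<not> (n * s div a < r)" by linarith
    also have "\<dots> \<longleftrightarrow> \<not> (n * s < a * r)" using assms(1) by (simp add: div_lt_iff)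
    also have "\<dots> \<longleftrightarrow> a * r < n * s"
    proof -
      have "a * r \<noteq> n * s" using nd by (metis dvd_triv_left)
      then show ?thesis by linarith
    qed
    finally show ?thesis by simp
  qed
  have "{r\<in>{1..n-1}. a*r < n * s} = {1..n * s div a}"
    using lt by (auto simp: key)
  then have "(\<Sum>r\<in>{1..n-1}. if a*r < n * s then 1 else 0) = (\<Sum>r\<in>{1..n * s div a}. (1::int))"
    by (simp add: sum.inter_filter[symmetric])
  also have "\<dots> = n * s div a" using ge by simp
  finally show ?thesis by simp
qed
lemma inner_sum:
  fixes a F :: int
  assumes "0 \<le> F" "F \<le> a - 1"
  shows "2 * (\<Sum>s\<in>{1..a-1}. if F < s then s else 0) = a*(a-1) - F*(F+1)"
proof -
  have "(\<Sum>s\<in>{1..a-1}. if F < s then s else 0) = (\<Sum>s\<in>{1..a-1}. s) - (\<Sum>s\<in>{1..a-1}. if s \<le> F then s else 0)"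
    by (subst sum_subtractf[symmetric]) (rule sum.cong, auto)
  also have "(\<Sum>s\<in>{1..a-1}. if s \<le> F then s else 0) = (\<Sum>s\<in>{1..F}. s)"
  proof -
    have "{s\<in>{1..a-1}. s \<le> F} = {1..F}" using assms by auto
    then show ?thesis by (simp add: sum.inter_filter[symmetric])
  qed
  finally have "2 * (\<Sum>s\<in>{1..a-1}. if F < s then s else 0) = 2 * (\<Sum>s\<in>{1..a-1}. s) - 2 * (\<Sum>s\<in>{1..F}. s)"
    by simp
  also have "\<dots> = (a-1)*a - F*(F+1)" using sum_id_int[of "a-1"] sum_id_int[of F] assms by simp
  finally show ?thesis by (simp add: algebra_simps)
qed

lemma T_swap:
  fixes a n :: int
  assumes "a > 0" "n > 0" "coprime a n"
  shows "2 * T n a = (n-1)*a*(a-1) - (\<Sum>r\<in>{1..n-1}. (a*r div n)^2 + a*r div n)"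
proof -
  have "T n a = (\<Sum>s\<in>{1..a-1}. s * (\<Sum>r\<in>{1..n-1}. if a*r < n * s then 1 else 0))"
    unfolding T_def by (rule sum.cong) (use count_lemma[OF assms] in auto)
  also have "\<dots> = (\<Sum>s\<in>{1..a-1}. \<Sum>r\<in>{1..n-1}. if a*r < n * s then s else 0)"
    by (simp add: sum_distrib_left if_distrib cong: if_cong)
  also have "\<dots> = (\<Sum>r\<in>{1..n-1}. \<Sum>s\<in>{1..a-1}. if a*r < n * s then s else 0)"
    by (rule sum.swap)
  also have "\<dots> = (\<Sum>r\<in>{1..n-1}. \<Sum>s\<in>{1..a-1}. if a*r div n < s then s else 0)"
  proof (rule sum.cong[OF refl], rule sum.cong[OF refl])
    fix r s assume r: "r \<in> {1..n-1}" and s: "s \<in> {1..a-1}"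
    have "a*r < n * s \<longleftrightarrow> a*r div n < s"
    proof
      assume "a*r < n * s"
      then show "a*r div n < s" using assms(2) by (simp add: div_lt_iff)
    next
      assume "a*r div n < s"
      then show "a*r < n * s" using assms(2) by (simp add: div_lt_iff)
    qed
    then show "(if a*r < n * s then s else 0) = (if a*r div n < s then s else 0)" by simp
  qed
  finally have "2 * T n a = (\<Sum>r\<in>{1..n-1}. 2 * (\<Sum>s\<in>{1..a-1}. if a*r div n < s then s else 0))"
    by (simp add: sum_distrib_left)
  also have "\<dots> = (\<Sum>r\<in>{1..n-1}. a*(a-1) - ((a*r div n)^2 + a*r div n))"
  proof (rule sum.cong[OF refl])
    fix r assume r: "r \<in> {1..n-1}"
    have "0 \<le> a*r" using r assms by simp
    then have "0 \<le> a*r div n" using assms(2) by (simp add: pos_imp_zdiv_nonneg_iff)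
    moreover have "a*r div n \<le> a - 1"
    proof -
      have "a*r < a*n" using r assms by auto
      then have "a*r div n < a" using assms(2) by (simp add: div_lt_iff mult.commute)
      then show ?thesis by simp
    qed
    ultimately show "2 * (\<Sum>s\<in>{1..a-1}. if a*r div n < s then s else 0) = a*(a-1) - ((a*r div n)^2 + a*r div n)"
      using inner_sum[of "a*r div n" a] by (simp add: power2_eq_square algebra_simps)
  qed
  also have "\<dots> = (n-1)*a*(a-1) - (\<Sum>r\<in>{1..n-1}. (a*r div n)^2 + a*r div n)"
    using assms by (simp add: sum_subtractf)
  finally show ?thesis .
qed
lemma sumFsq:
  fixes a n :: int
  assumes "n > 0" "coprime a n"
  shows "n^2 * (\<Sum>r\<in>{1..n-1}. (a*r div n)^2) = (1-a^2)*(\<Sum>r\<in>{1..n-1}. r^2) + 2*a*n*T a n"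
proof -
  define S where "S = {1..n-1}"
  have e: "n*(a*r div n) = a*r - a*r mod n" for r by (simp add: minus_mod_eq_mult_div)
  have s1: "n^2 * (\<Sum>r\<in>S. (a*r div n)^2) = (\<Sum>r\<in>S. (a*r - a*r mod n)^2)"
    unfolding sum_distrib_left by (rule sum.cong) (auto simp: e[symmetric] power_mult_distrib)
  have e2: "n * (r * (a*r div n)) = a*r^2 - r*(a*r mod n)" for r
  proof -
    have "n * (r * (a*r div n)) = r * (n * (a*r div n))" by simp
    also have "\<dots> = r * (a*r - a*r mod n)" by (simp only: e)
    also have "\<dots> = a*r^2 - r*(a*r mod n)" by (simp add: algebra_simps power2_eq_square)
    finally show ?thesis .
  qed
  have s2: "n * T a n = (\<Sum>r\<in>S. a*r^2 - r*(a*r mod n))"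
    unfolding T_def S_def sum_distrib_left
    by (rule sum.cong) (simp_all only: e2)
  have s3: "(\<Sum>r\<in>S. (a*r mod n)^2) = (\<Sum>r\<in>S. r^2)"
    unfolding S_def using sum.reindex_bij_betw[OF mult_mod_bij[OF assms], of "\<lambda>x. x^2"] by simp
  have "(\<Sum>r\<in>S. (a*r - a*r mod n)^2) = (\<Sum>r\<in>S. a^2*r^2 - 2*a*(r*(a*r mod n)) + (a*r mod n)^2)"
    by (rule sum.cong) (auto simp: power2_eq_square algebra_simps)
  also have "\<dots> = a^2*(\<Sum>r\<in>S. r^2) - 2*a*(\<Sum>r\<in>S. r*(a*r mod n)) + (\<Sum>r\<in>S. (a*r mod n)^2)"
    by (simp add: sum.distrib sum_subtractf sum_distrib_left)
  also have "(\<Sum>r\<in>S. r*(a*r mod n)) = a*(\<Sum>r\<in>S. r^2) - n * T a n"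
    using s2 by (simp add: sum_subtractf sum_distrib_left)
  finally have fin: "(\<Sum>r\<in>S. (a*r - a*r mod n)^2) = a^2*(\<Sum>r\<in>S. r^2) - 2*a*(a*(\<Sum>r\<in>S. r^2) - n * T a n) + (\<Sum>r\<in>S. (a*r mod n)^2)" .
  have "n^2 * (\<Sum>r\<in>S. (a*r div n)^2) = a^2*(\<Sum>r\<in>S. r^2) - 2*a*(a*(\<Sum>r\<in>S. r^2) - n * T a n) + (\<Sum>r\<in>S. r^2)"
    using fin s1 s3 by simp
  then show ?thesis unfolding S_def by (simp add: algebra_simps power2_eq_square)
qed

lemma recip:
  fixes a n :: int
  assumes "a > 0" "n > 0" "coprime a n"
  shows "12*(n*T n a + a*T a n) = 6*n*(n-1)*a*(a-1) - (1-a^2)*(n-1)*(2*n-1) - 3*n*(a-1)*(n-1)"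
proof -
  define Q where "Q = (\<Sum>r\<in>{1..n-1}. (a*r div n)^2)"
  define S where "S = (\<Sum>r\<in>{1..n-1}. a*r div n)"
  define P where "P = (\<Sum>r\<in>{1..n-1}. r^2)"
  have f1: "2 * T n a = (n-1)*a*(a-1) - Q - S"
    using T_swap[OF assms] unfolding Q_def S_def by (simp add: sum.distrib)
  have f2: "n^2 * Q = (1-a^2)*P + 2*a*n*T a n" unfolding Q_def P_def using sumFsq[OF assms(2,3)] .
  have f3: "2 * S = (a-1)*(n-1)" unfolding S_def using pair_floor[OF assms(2,3)] .
  have f4: "6 * P = (n-1)*n*(2*n-1)" unfolding P_def using sum_sq_int[of "n-1"] assms by (simp add: algebra_simps)
  have "n * (12*(n*T n a + a*T a n)) = n * (6*n*(n-1)*a*(a-1) - (1-a^2)*(n-1)*(2*n-1) - 3*n*(a-1)*(n-1))"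
  proof -
    have "n * (12*(n*T n a + a*T a n)) = 6*n^2*(2*T n a) + 12*a*n*T a n" by (simp add: algebra_simps power2_eq_square)
    also have "\<dots> = 6*n^2*((n-1)*a*(a-1) - Q - S) + 12*a*n*T a n" by (simp only: f1)
    also have "\<dots> = 6*n^2*((n-1)*a*(a-1)) - 6*(n^2*Q) - 3*n^2*(2*S) + 12*a*n*T a n" by (simp add: algebra_simps)
    also have "\<dots> = 6*n^2*((n-1)*a*(a-1)) - 6*((1-a^2)*P + 2*a*n*T a n) - 3*n^2*((a-1)*(n-1)) + 12*a*n*T a n" by (simp only: f2 f3)
    also have "\<dots> = 6*n^2*((n-1)*a*(a-1)) - (1-a^2)*(6*P) - 3*n^2*((a-1)*(n-1))" by (simp add: algebra_simps)
    also have "\<dots> = 6*n^2*((n-1)*a*(a-1)) - (1-a^2)*((n-1)*n*(2*n-1)) - 3*n^2*((a-1)*(n-1))" by (simp only: f4)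
    also have "\<dots> = n * (6*n*(n-1)*a*(a-1) - (1-a^2)*(n-1)*(2*n-1) - 3*n*(a-1)*(n-1))" by (simp add: algebra_simps power2_eq_square)
    finally show ?thesis .
  qed
  then show ?thesis using assms(2) by simp
qed
definition invc :: "(int \<Rightarrow> int) \<Rightarrow> int \<Rightarrow> int" where
  "invc f N = (\<Sum>j\<in>{1..N}. \<Sum>i\<in>{1..j-1}. if f j < f i then 1 else 0)"

lemma double_sum_id:
  fixes F :: "int \<Rightarrow> int"
  assumes "0 \<le> N"
  shows "(\<Sum>j\<in>{1..N}. \<Sum>i\<in>{1..j-1}. F j - F i - F (j-i)) = (\<Sum>j\<in>{1..N}. F j * (3*j - 2*N - 1))"
  using assms
proof (induct N rule: int_ge_induct)
  case base then show ?case by simp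
next
  case (step N)
  have ins: "{1..N+1} = insert (N+1) {1..N}" using step by auto
  have r: "(\<Sum>i\<in>{1..N}. F (N+1-i)) = (\<Sum>i\<in>{1..N}. F i)"
    by (rule sum.reindex_bij_witness[of _ "\<lambda>i. N+1-i" "\<lambda>i. N+1-i"]) auto
  have "(\<Sum>i\<in>{1..N}. F (N+1) - F i - F (N+1-i)) = N * F (N+1) - 2 * (\<Sum>i\<in>{1..N}. F i)"
    using r step by (simp add: sum_subtractf)
  moreover have "(\<Sum>j\<in>{1..N}. F j * (3*j - 2*(N+1) - 1)) = (\<Sum>j\<in>{1..N}. F j * (3*j - 2*N - 1)) - 2 * (\<Sum>i\<in>{1..N}. F i)"
    by (simp add: sum_subtractf[symmetric] sum_distrib_left algebra_simps)
  ultimately show ?case using step ins by (simp add: algebra_simps)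
qed

lemma ind_lemma:
  fixes K h i j :: int
  assumes "h > 0" "coprime K h" "1 \<le> i" "i < j" "j \<le> h-1"
  shows "K*j div h - K*i div h - K*(j-i) div h = (if K*j mod h < K*i mod h then 1 else 0)"
proof -
  define D where "D = K*j div h - K*i div h - K*(j-i) div h"
  have nz: "K*x mod h \<noteq> 0" if "x \<in> {1..h-1}" for x
    using notdvd_coprime[OF assms(1) assms(2) that] by (simp add: dvd_eq_mod_eq_0)
  have b: "1 \<le> K*x mod h" "K*x mod h \<le> h - 1" if "x \<in> {1..h-1}" for x
    using nz[OF that] assms(1) pos_mod_sign[of h "K*x"] pos_mod_bound[of h "K*x"] by linarith+
  have bi: "1 \<le> K*i mod h" "K*i mod h \<le> h - 1" using b[of i] assms by auto
  have bj: "1 \<le> K*j mod h" "K*j mod h \<le> h - 1" using b[of j] assms by auto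
  have bd: "1 \<le> K*(j-i) mod h" "K*(j-i) mod h \<le> h - 1" using b[of "j-i"] assms by auto
  have ex: "h * D = K*i mod h + K*(j-i) mod h - K*j mod h"
  proof -
    have "K*j = K*i + K*(j-i)" by (simp add: algebra_simps)
    moreover have "K*j = h*(K*j div h) + K*j mod h" "K*i = h*(K*i div h) + K*i mod h"
      "K*(j-i) = h*(K*(j-i) div h) + K*(j-i) mod h" by simp_all
    ultimately show ?thesis unfolding D_def by (simp add: algebra_simps)
  qed
  have D01: "D = 0 \<or> D = 1"
  proof -
    have "\<not> D \<le> -1"
    proof
      assume "D \<le> -1"
      then have "h * D \<le> h * (-1)" using assms(1) by (intro mult_left_mono) auto
      then show False using ex bi bj bd by linarith
    qed
    moreover have "\<not> D \<ge> 2"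
    proof
      assume "D \<ge> 2"
      then have "h * D \<ge> h * 2" using assms(1) by (intro mult_left_mono) auto
      then show False using ex bi bj bd by linarith
    qed
    ultimately show ?thesis by linarith
  qed
  show ?thesis
  proof (cases "D = 0")
    case True
    then have "K*j mod h = K*i mod h + K*(j-i) mod h" using ex by simp
    then show ?thesis using True bd unfolding D_def by simp
  next
    case False
    then have "D = 1" using D01 by simp
    then have "K*j mod h = K*i mod h + K*(j-i) mod h - h" using ex by simp
    then show ?thesis using \<open>D = 1\<close> bd unfolding D_def by simp
  qed
qed

lemma invc_formula:
  fixes K h :: int
  assumes "h > 0" "coprime K h"
  shows "invc (\<lambda>x. K*x mod h) (h-1) = 3 * T K h - (2*h-1) * (\<Sum>r\<in>{1..h-1}. K*r div h)"
proof -
  have "invc (\<lambda>x. K*x mod h) (h-1) = (\<Sum>j\<in>{1..h-1}. \<Sum>i\<in>{1..j-1}. K*j div h - K*i div h - K*(j-i) div h)"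
    unfolding invc_def
    by (intro sum.cong refl) (use ind_lemma[OF assms] in auto)
  also have "\<dots> = (\<Sum>j\<in>{1..h-1}. (K*j div h) * (3*j - 2*(h-1) - 1))"
    using double_sum_id[of "h-1" "\<lambda>x. K*x div h"] assms by simp
  also have "\<dots> = (\<Sum>j\<in>{1..h-1}. 3 * (j * (K*j div h)) - (2*h-1) * (K*j div h))"
    by (rule sum.cong) (auto simp: algebra_simps)
  also have "\<dots> = 3 * T K h - (2*h-1) * (\<Sum>r\<in>{1..h-1}. K*r div h)"
    unfolding T_def by (simp add: sum_subtractf sum_distrib_left)
  finally show ?thesis .
qed
definition indf :: "(int \<Rightarrow> int) \<Rightarrow> int \<times> int \<Rightarrow> int" where
  "indf f p = (if f (fst p) < f (snd p) then 1 else 0)"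

lemma invc_pairs:
  "invc f N = (\<Sum>p\<in>Sigma {1..N} (\<lambda>j. {1..j-1}). indf f p)"
  unfolding invc_def indf_def by (subst sum.Sigma) (auto simp: case_prod_beta)

lemma invc_comp:
  fixes \<sigma> \<tau> :: "int \<Rightarrow> int"
  assumes s: "bij_betw \<sigma> {1..N} {1..N}" and t: "bij_betw \<tau> {1..N} {1..N}"
  shows "even (invc (\<lambda>x. \<sigma> (\<tau> x)) N + invc \<sigma> N + invc \<tau> N)"
proof -
  define P where "P = Sigma {1..N} (\<lambda>j. {1..j-1})"
  define \<Phi> where "\<Phi> p = (max (\<tau> (fst p)) (\<tau> (snd p)), min (\<tau> (fst p)) (\<tau> (snd p)))" for p
  have fin: "finite P" unfolding P_def by auto
  have Pmem: "p \<in> P \<longleftrightarrow> snd p < fst p \<and> 1 \<le> snd p \<and> fst p \<le> N" for p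
    unfolding P_def by (cases p) auto
  have tinj: "inj_on \<tau> {1..N}" and tmap: "\<tau> ` {1..N} = {1..N}" using t by (auto simp: bij_betw_def)
  have sinj: "inj_on \<sigma> {1..N}" using s by (auto simp: bij_betw_def)
  have tin: "\<tau> x \<in> {1..N}" if "x \<in> {1..N}" for x using tmap that by auto
  have sub: "\<Phi> ` P \<subseteq> P"
  proof
    fix q assume "q \<in> \<Phi> ` P"
    then obtain p where p: "p \<in> P" "q = \<Phi> p" by auto
    have "fst p \<in> {1..N}" "snd p \<in> {1..N}" "fst p \<noteq> snd p" using p(1) Pmem by auto
    then have "\<tau> (fst p) \<in> {1..N}" "\<tau> (snd p) \<in> {1..N}" "\<tau> (fst p) \<noteq> \<tau> (snd p)"
      using tin tinj by (auto dest: inj_onD)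
    then show "q \<in> P" unfolding p(2) Pmem \<Phi>_def by auto
  qed
  have inj: "inj_on \<Phi> P"
  proof
    fix p q assume pq: "p \<in> P" "q \<in> P" "\<Phi> p = \<Phi> q"
    have m: "fst p \<in> {1..N}" "snd p \<in> {1..N}" "fst q \<in> {1..N}" "snd q \<in> {1..N}"
      "snd p < fst p" "snd q < fst q" using pq(1,2) Pmem by auto
    have "{\<tau> (fst p), \<tau> (snd p)} = {\<tau> (fst q), \<tau> (snd q)}"
      using pq(3) unfolding \<Phi>_def by (auto simp: max_def min_def split: if_splits)
    then have "(\<tau> (fst p) = \<tau> (fst q) \<and> \<tau> (snd p) = \<tau> (snd q)) \<or> (\<tau> (fst p) = \<tau> (snd q) \<and> \<tau> (snd p) = \<tau> (fst q))"
      by (auto simp: doubleton_eq_iff)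
    then have "(fst p = fst q \<and> snd p = snd q) \<or> (fst p = snd q \<and> snd p = fst q)"
      using m tinj by (auto dest: inj_onD)
    then show "p = q" using m by (auto simp: prod_eq_iff)
  qed
  have bij: "bij_betw \<Phi> P P" using endo_inj_surj[OF fin sub inj] inj by (simp add: bij_betw_def)
  have pw: "indf (\<lambda>x. \<sigma> (\<tau> x)) p = indf \<tau> p + indf \<sigma> (\<Phi> p) - 2 * (indf \<tau> p * indf \<sigma> (\<Phi> p))"
    if "p \<in> P" for p
  proof -
    have m: "fst p \<in> {1..N}" "snd p \<in> {1..N}" "fst p \<noteq> snd p" using that Pmem by auto
    then have tm: "\<tau> (fst p) \<in> {1..N}" "\<tau> (snd p) \<in> {1..N}" "\<tau> (fst p) \<noteq> \<tau> (snd p)"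
      using tin tinj by (auto dest: inj_onD)
    then have "\<sigma> (\<tau> (fst p)) \<noteq> \<sigma> (\<tau> (snd p))" using sinj by (auto dest: inj_onD)
    then show ?thesis using tm unfolding indf_def \<Phi>_def by (auto simp: max_def min_def)
  qed
  have "invc (\<lambda>x. \<sigma> (\<tau> x)) N = (\<Sum>p\<in>P. indf \<tau> p + indf \<sigma> (\<Phi> p) - 2 * (indf \<tau> p * indf \<sigma> (\<Phi> p)))"
    unfolding invc_pairs P_def[symmetric] by (rule sum.cong) (use pw in auto)
  also have "\<dots> = invc \<tau> N + (\<Sum>p\<in>P. indf \<sigma> (\<Phi> p)) - 2 * (\<Sum>p\<in>P. indf \<tau> p * indf \<sigma> (\<Phi> p))"
    unfolding invc_pairs P_def[symmetric] by (simp add: sum.distrib sum_subtractf sum_distrib_left)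
  also have "(\<Sum>p\<in>P. indf \<sigma> (\<Phi> p)) = invc \<sigma> N"
    unfolding invc_pairs P_def[symmetric] using sum.reindex_bij_betw[OF bij, of "indf \<sigma>"] by simp
  finally show ?thesis by simp
qed
lemma invc_mult:
  fixes h x y :: int
  assumes "h > 0" "coprime x h" "coprime y h"
  shows "even (invc (\<lambda>r. (x*y)*r mod h) (h-1) + invc (\<lambda>r. x*r mod h) (h-1) + invc (\<lambda>r. y*r mod h) (h-1))"
proof -
  have e: "(\<lambda>r. (x*y)*r mod h) = (\<lambda>r. x*(y*r mod h) mod h)"
    by (rule ext) (simp add: mod_mult_right_eq mult.assoc)
  show ?thesis unfolding e
    using invc_comp[OF mult_mod_bij[OF assms(1,2)] mult_mod_bij[OF assms(1,3)]] by simp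
qed

lemma T_parity:
  fixes h K :: int
  assumes "h > 0" "coprime K h"
  shows "T K h = invc (\<lambda>r. K*r mod h) (h-1) + (\<Sum>r\<in>{1..h-1}. K*r div h) + 2 * ((h-1)*(\<Sum>r\<in>{1..h-1}. K*r div h) - T K h)"
  using invc_formula[OF assms] by (simp add: algebra_simps)

lemma lin_helper:
  fixes t1 t2 t3 t6 i1 i2 i3 i6 s1 s2 s3 s6 z1 z2 z3 z6 iA iB iAB iC a1 a2 a3 a4 v :: int
  assumes "t1 = i1 + s1 + 2*z1" "t2 = i2 + s2 + 2*z2" "t3 = i3 + s3 + 2*z3" "t6 = i6 + s6 + 2*z6"
    "iA + i1 + i3 = 2*a1" "iB + i2 + i6 = 2*a2" "iAB + iA + iB = 2*a3" "iAB + iC + iC = 2*a4"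
    "s1 + s2 + s3 + s6 = 2 * v"
  shows "t1 + t2 + t3 + t6 = 2*(z1+z2+z3+z6 + a1 + a2 - a3 + a4 - iC + v)"
  using assms by presburger

lemma T_sum_even:
  fixes h m :: int
  assumes "h > 0" "odd h" "m > 0" "coprime (6*m) h"
  shows "even (T m h + T (2*m) h + T (3*m) h + T (6*m) h)"
proof -
  define I where "I a = invc (\<lambda>r. a*r mod h) (h-1)" for a
  define S where "S a = (\<Sum>r\<in>{1..h-1}. a*r div h)" for a
  have c6: "coprime 2 h" "coprime 3 h" "coprime m h" using assms(4)
    by (auto simp: coprime_mult_left_iff[of 2 "3*m", simplified] coprime_mult_left_iff)
  have "coprime (2*(2*3)) h" using c6 by (simp only: coprime_mult_left_iff)
  then have c12: "coprime 12 h" by simp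
  have cm: "coprime (2*m) h" "coprime (3*m) h" "coprime (6*m) h" "coprime (m*(3*m)) h"
     "coprime ((2*m)*(6*m)) h" "coprime (6*m*m) h"
    using c6 c12 assms(4) by (auto simp: coprime_mult_left_iff)
  have Tp: "\<exists>z. T a h = I a + S a + 2*z" if "coprime a h" for a
    using T_parity[OF assms(1) that] unfolding I_def S_def by blast
  obtain z1 where z1: "T m h = I m + S m + 2*z1" using Tp c6 by blast
  obtain z2 where z2: "T (2*m) h = I (2*m) + S (2*m) + 2*z2" using Tp cm by blast
  obtain z3 where z3: "T (3*m) h = I (3*m) + S (3*m) + 2*z3" using Tp cm by blast
  obtain z6 where z6: "T (6*m) h = I (6*m) + S (6*m) + 2*z6" using Tp cm by blast
  have "even (I (m*(3*m)) + I m + I (3*m))" unfolding I_def using invc_mult[OF assms(1) c6(3) cm(2)] .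
  then obtain a1 where a1: "I (m*(3*m)) + I m + I (3*m) = 2*a1" by blast
  have "even (I ((2*m)*(6*m)) + I (2*m) + I (6*m))" unfolding I_def using invc_mult[OF assms(1) cm(1) cm(3)] .
  then obtain a2 where a2: "I ((2*m)*(6*m)) + I (2*m) + I (6*m) = 2*a2" by blast
  have "even (I ((m*(3*m))*((2*m)*(6*m))) + I (m*(3*m)) + I ((2*m)*(6*m)))" unfolding I_def using invc_mult[OF assms(1) cm(4) cm(5)] .
  then obtain a3 where a3: "I ((m*(3*m))*((2*m)*(6*m))) + I (m*(3*m)) + I ((2*m)*(6*m)) = 2*a3" by blast
  have "even (I ((6*m*m)*(6*m*m)) + I (6*m*m) + I (6*m*m))" unfolding I_def using invc_mult[OF assms(1) cm(6) cm(6)] .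
  then obtain a4 where a4: "I ((6*m*m)*(6*m*m)) + I (6*m*m) + I (6*m*m) = 2*a4" by blast
  have eq: "(m*(3*m))*((2*m)*(6*m)) = (6*m*m)*(6*m*m)" by (simp add: algebra_simps)
  have sp: "2 * S a = (a-1)*(h-1)" if "coprime a h" for a
    unfolding S_def using pair_floor[OF assms(1) that] .
  obtain u where u: "h - 1 = 2*u" using assms(2) by (metis oddE add_diff_cancel_right')
  have "2 * (S m + S (2*m) + S (3*m) + S (6*m)) = (12*m - 4)*(h-1)"
    using sp[OF c6(3)] sp[OF cm(1)] sp[OF cm(2)] sp[OF cm(3)] by (simp add: algebra_simps)
  then have sS: "S m + S (2*m) + S (3*m) + S (6*m) = 2*((6*m - 2)*u)" using u by (simp add: algebra_simps)
  obtain v where v: "S m + S (2*m) + S (3*m) + S (6*m) = 2 * v" using sS by blast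
  have "T m h + T (2*m) h + T (3*m) h + T (6*m) h = 2*(z1+z2+z3+z6 + a1 + a2 - a3 + a4 - I (6*m*m) + v)"
    by (rule lin_helper[OF z1 z2 z3 z6 a1 a2 a3[unfolded eq] a4 v])
  then show ?thesis by simp
qed
definition RR :: "int \<Rightarrow> int \<Rightarrow> int" where
  "RR h K = 6*K*(K-1)*h*(h-1) - (1-h^2)*(K-1)*(2*K-1) - 3*K*(h-1)*(K-1)"
definition PP :: "int \<Rightarrow> int \<Rightarrow> int" where
  "PP h K = 2*h^2*(K-1)*(2*K-1) - 3*h*K*(K-1) - RR h K"

lemma poly1: "18*PP h m + 6*PP h (3*m) + 3*PP h (6*m) - 9*PP h (2*m) + 2*h*18*(6*m)
   + 2*h^2*(-9-9*(6*m)-4*(6*m)^2) - 2*(9-2*(6*m)^2) = -864*m^2*h*(h-1)"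
  by (simp add: PP_def RR_def algebra_simps power2_eq_square)

lemma poly2: "-54*PP h m + 9*PP h (2*m) + 6*PP h (3*m) + 3*PP h (6*m)
   + 4*h^2*(9-2*(6*m)^2) - 4*(-9-(6*m)^2) = -864*m^2*h*(h-1)"
  by (simp add: PP_def RR_def algebra_simps power2_eq_square)

lemma combo1:
  fixes h m hp t w E1 E2 E3 E6 P1 P2 P3 P6 U1 U2 U3 U6 :: int
  assumes "h*E1 = P1 + 12*m*U1" "h*E2 = P2 + 12*(2*m)*U2" "h*E3 = P3 + 12*(3*m)*U3" "h*E6 = P6 + 12*(6*m)*U6"
    "18*P1 + 6*P3 + 3*P6 - 9*P2 + 2*h*18*(6*m) + 2*h^2*(-9-9*(6*m)-4*(6*m)^2) - 2*(9-2*(6*m)^2) = -864*m^2*h*(h-1)"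
    "U1+U2+U3+U6 = 2 * w" "h*hp = -1 + 216*m*t"
  shows "h*(18*E1 + 6*E3 + 3*E6 - 9*E2 + 2*(18*(6*m) + h*(-9-9*(6*m)-4*(6*m)^2) + hp*(9-2*(6*m)^2)))
     = 432*m*(-2*m*h*(h-1) + w - U2 + t*(9-2*(6*m)^2))"
proof -
  have "h*(18*E1 + 6*E3 + 3*E6 - 9*E2 + 2*(18*(6*m) + h*(-9-9*(6*m)-4*(6*m)^2) + hp*(9-2*(6*m)^2)))
     = 18*(h*E1) + 6*(h*E3) + 3*(h*E6) - 9*(h*E2) + 2*h*18*(6*m) + 2*h^2*(-9-9*(6*m)-4*(6*m)^2) + 2*(h*hp)*(9-2*(6*m)^2)"
    by (simp add: algebra_simps power2_eq_square)
  also have "\<dots> = 18*(P1 + 12*m*U1) + 6*(P3 + 12*(3*m)*U3) + 3*(P6 + 12*(6*m)*U6) - 9*(P2 + 12*(2*m)*U2) + 2*h*18*(6*m) + 2*h^2*(-9-9*(6*m)-4*(6*m)^2) + 2*(-1 + 216*m*t)*(9-2*(6*m)^2)"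
    by (simp only: assms(1-4,7))
  also have "\<dots> = (18*P1 + 6*P3 + 3*P6 - 9*P2 + 2*h*18*(6*m) + 2*h^2*(-9-9*(6*m)-4*(6*m)^2) - 2*(9-2*(6*m)^2)) + 216*m*(U1+U2+U3+U6) - 432*m*U2 + 432*m*t*(9-2*(6*m)^2)"
    by (simp add: algebra_simps)
  also have "\<dots> = -864*m^2*h*(h-1) + 216*m*(2 * w) - 432*m*U2 + 432*m*t*(9-2*(6*m)^2)"
    by (simp only: assms(5,6))
  also have "\<dots> = 432*m*(-2*m*h*(h-1) + w - U2 + t*(9-2*(6*m)^2))"
    by (simp add: algebra_simps power2_eq_square)
  finally show ?thesis .
qed

lemma combo2:
  fixes h m hp t w E1 E2 E3 E6 P1 P2 P3 P6 U1 U2 U3 U6 :: int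
  assumes "h*E1 = P1 + 12*m*U1" "h*E2 = P2 + 12*(2*m)*U2" "h*E3 = P3 + 12*(3*m)*U3" "h*E6 = P6 + 12*(6*m)*U6"
    "-54*P1 + 9*P2 + 6*P3 + 3*P6 + 4*h^2*(9-2*(6*m)^2) - 4*(-9-(6*m)^2) = -864*m^2*h*(h-1)"
    "U1+U2+U3+U6 = 2 * w" "h*hp = -1 + 216*m*t"
  shows "h*(-54*E1 + 9*E2 + 6*E3 + 3*E6 + 4*(h*(9-2*(6*m)^2) + hp*(-9-(6*m)^2)))
     = 432*m*(-2*m*h*(h-1) + w - 2*U1 + 2*t*(-9-(6*m)^2))"
proof -
  have "h*(-54*E1 + 9*E2 + 6*E3 + 3*E6 + 4*(h*(9-2*(6*m)^2) + hp*(-9-(6*m)^2)))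
     = -54*(h*E1) + 9*(h*E2) + 6*(h*E3) + 3*(h*E6) + 4*h^2*(9-2*(6*m)^2) + 4*(h*hp)*(-9-(6*m)^2)"
    by (simp add: algebra_simps power2_eq_square)
  also have "\<dots> = -54*(P1 + 12*m*U1) + 9*(P2 + 12*(2*m)*U2) + 6*(P3 + 12*(3*m)*U3) + 3*(P6 + 12*(6*m)*U6) + 4*h^2*(9-2*(6*m)^2) + 4*(-1 + 216*m*t)*(-9-(6*m)^2)"
    by (simp only: assms(1-4,7))
  also have "\<dots> = (-54*P1 + 9*P2 + 6*P3 + 3*P6 + 4*h^2*(9-2*(6*m)^2) - 4*(-9-(6*m)^2)) + 216*m*(U1+U2+U3+U6) - 864*m*U1 + 864*m*t*(-9-(6*m)^2)"
    by (simp add: algebra_simps)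
  also have "\<dots> = -864*m^2*h*(h-1) + 216*m*(2 * w) - 864*m*U1 + 864*m*t*(-9-(6*m)^2)"
    by (simp only: assms(5,6))
  also have "\<dots> = 432*m*(-2*m*h*(h-1) + w - 2*U1 + 2*t*(-9-(6*m)^2))"
    by (simp add: algebra_simps power2_eq_square)
  finally show ?thesis .
qed
lemma hE_lemma:
  fixes h K :: int
  assumes "h > 0" "K > 0" "coprime h K"
  shows "h * (2*h*(K-1)*(2*K-1) - 12*T h K - 3*K*(K-1)) = PP h K + 12*K*T K h"
proof -
  have r: "RR h K = 12*K*T K h + 12*h*T h K"
    using recip[OF assms(1,2,3)] unfolding RR_def by (simp add: algebra_simps)
  show ?thesis unfolding PP_def r by (simp add: algebra_simps power2_eq_square)
qed

lemma core:
  fixes h m hp :: int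
  assumes h0: "h > 0" and m0: "m > 0" and cp: "coprime (6*m) h"
    and hh: "[h*hp = -1] (mod (216*m))"
  shows "\<exists>j::int. 216 * real_of_int m * (dedekind_sum h m + dedekind_sum h (3*m) + dedekind_sum h (6*m) - dedekind_sum h (2*m))
            + 2 * of_int (18*(6*m) + h*(-9-9*(6*m)-4*(6*m)^2) + hp*(9-2*(6*m)^2)) = 432 * real_of_int m * of_int j"
    and "\<exists>j::int. 216 * real_of_int m * (dedekind_sum h (3*m) + dedekind_sum h (2*m) + dedekind_sum h (6*m) - 3 * dedekind_sum h m)
            + 4 * of_int (h*(9-2*(6*m)^2) + hp*(-9-(6*m)^2)) = 432 * real_of_int m * of_int j"
proof -
  define E where "E K = 2*h*(K-1)*(2*K-1) - 12*T h K - 3*K*(K-1)" for K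
  have c: "coprime 2 h" "coprime 3 h" "coprime m h" using cp
    by (auto simp: coprime_mult_left_iff[of 2 "3*m", simplified] coprime_mult_left_iff)
  have oddh: "odd h" using c(1) by (simp add: coprime_left_2_iff_odd)
  have cK: "coprime h m" "coprime h (2*m)" "coprime h (3*m)" "coprime h (6*m)"
    using c cp by (auto simp: coprime_commute coprime_mult_right_iff coprime_mult_left_iff)
  have hE: "h * E K = PP h K + 12*K*T K h" if "K > 0" "coprime h K" for K
    unfolding E_def using hE_lemma[OF h0 that] .
  have eK: "12 * of_int K * dedekind_sum h K = of_int (E K)" if "K > 0" for K
    unfolding E_def using T_formula[OF that] .
  obtain w where w: "T m h + T (2*m) h + T (3*m) h + T (6*m) h = 2 * w"
    using T_sum_even[OF h0 oddh m0 cp] by blast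
  obtain t where t: "h*hp = -1 + 216*m*t"
  proof -
    have "[-1 = h*hp] (mod (216*m))" using hh by (simp add: cong_sym_eq)
    then obtain k where "h*hp = -1 + 216*m*k" using cong_iff_lin by blast
    then show ?thesis using that by blast
  qed
  have cop: "coprime (432*m) h"
  proof -
    have "coprime (2*2*2*2*3*3*3*m) h" using c by (simp only: coprime_mult_left_iff)
    then show ?thesis by simp
  qed
  have cop': "coprime h (432*m)" using cop by (simp add: coprime_commute)
  have m1: "m > 0" "2*m > 0" "3*m > 0" "6*m > 0" using m0 by auto
  have X1: "h*(18*E m + 6*E (3*m) + 3*E (6*m) - 9*E (2*m) + 2*(18*(6*m) + h*(-9-9*(6*m)-4*(6*m)^2) + hp*(9-2*(6*m)^2)))
     = 432*m*(-2*m*h*(h-1) + w - T (2*m) h + t*(9-2*(6*m)^2))"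
    by (rule combo1[OF hE[OF m1(1) cK(1)] hE[OF m1(2) cK(2)] hE[OF m1(3) cK(3)] hE[OF m1(4) cK(4)] poly1 w t])
  have X2: "h*(-54*E m + 9*E (2*m) + 6*E (3*m) + 3*E (6*m) + 4*(h*(9-2*(6*m)^2) + hp*(-9-(6*m)^2)))
     = 432*m*(-2*m*h*(h-1) + w - 2*T m h + 2*t*(-9-(6*m)^2))"
    by (rule combo2[OF hE[OF m1(1) cK(1)] hE[OF m1(2) cK(2)] hE[OF m1(3) cK(3)] hE[OF m1(4) cK(4)] poly2 w t])
  have d1: "432*m dvd (18*E m + 6*E (3*m) + 3*E (6*m) - 9*E (2*m) + 2*(18*(6*m) + h*(-9-9*(6*m)-4*(6*m)^2) + hp*(9-2*(6*m)^2)))"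
  proof -
    have "432*m dvd h*(18*E m + 6*E (3*m) + 3*E (6*m) - 9*E (2*m) + 2*(18*(6*m) + h*(-9-9*(6*m)-4*(6*m)^2) + hp*(9-2*(6*m)^2)))"
      unfolding X1 by simp
    then show ?thesis using cop' by (rule dvdlem)
  qed
  have d2: "432*m dvd (-54*E m + 9*E (2*m) + 6*E (3*m) + 3*E (6*m) + 4*(h*(9-2*(6*m)^2) + hp*(-9-(6*m)^2)))"
  proof -
    have "432*m dvd h*(-54*E m + 9*E (2*m) + 6*E (3*m) + 3*E (6*m) + 4*(h*(9-2*(6*m)^2) + hp*(-9-(6*m)^2)))"
      unfolding X2 by simp
    then show ?thesis using cop' by (rule dvdlem)
  qed
  have s1: "216*real_of_int m * dedekind_sum h m = of_int (18 * E m)"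
    using eK[OF m1(1)] by simp
  have s2: "216*real_of_int m * dedekind_sum h (2*m) = of_int (9 * E (2*m))"
    using eK[OF m1(2)] by simp
  have s3: "216*real_of_int m * dedekind_sum h (3*m) = of_int (6 * E (3*m))"
    using eK[OF m1(3)] by simp
  have s6: "216*real_of_int m * dedekind_sum h (6*m) = of_int (3 * E (6*m))"
    using eK[OF m1(4)] by simp
  show "\<exists>j::int. 216 * real_of_int m * (dedekind_sum h m + dedekind_sum h (3*m) + dedekind_sum h (6*m) - dedekind_sum h (2*m))
            + 2 * of_int (18*(6*m) + h*(-9-9*(6*m)-4*(6*m)^2) + hp*(9-2*(6*m)^2)) = 432 * real_of_int m * of_int j"
  proof -
    obtain j where j: "18*E m + 6*E (3*m) + 3*E (6*m) - 9*E (2*m) + 2*(18*(6*m) + h*(-9-9*(6*m)-4*(6*m)^2) + hp*(9-2*(6*m)^2)) = 432*m*j"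
      using d1 by (elim dvdE)
    have "216*real_of_int m*(dedekind_sum h m + dedekind_sum h (3*m) + dedekind_sum h (6*m) - dedekind_sum h (2*m))
      = of_int (18 * E m) + of_int (6 * E (3*m)) + of_int (3 * E (6*m)) - of_int (9 * E (2*m))"
      using s1 s2 s3 s6 by (simp add: algebra_simps)
    then have "216*real_of_int m*(dedekind_sum h m + dedekind_sum h (3*m) + dedekind_sum h (6*m) - dedekind_sum h (2*m))
            + 2 * of_int (18*(6*m) + h*(-9-9*(6*m)-4*(6*m)^2) + hp*(9-2*(6*m)^2))
        = of_int (18*E m + 6*E (3*m) + 3*E (6*m) - 9*E (2*m) + 2*(18*(6*m) + h*(-9-9*(6*m)-4*(6*m)^2) + hp*(9-2*(6*m)^2)))"
      by simp
    also have "\<dots> = 432*real_of_int m * of_int j" unfolding j by simp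
    finally show ?thesis by blast
  qed
  show "\<exists>j::int. 216 * real_of_int m * (dedekind_sum h (3*m) + dedekind_sum h (2*m) + dedekind_sum h (6*m) - 3 * dedekind_sum h m)
            + 4 * of_int (h*(9-2*(6*m)^2) + hp*(-9-(6*m)^2)) = 432 * real_of_int m * of_int j"
  proof -
    obtain j where j: "-54*E m + 9*E (2*m) + 6*E (3*m) + 3*E (6*m) + 4*(h*(9-2*(6*m)^2) + hp*(-9-(6*m)^2)) = 432*m*j"
      using d2 by (elim dvdE)
    have "216*real_of_int m*(dedekind_sum h (3*m) + dedekind_sum h (2*m) + dedekind_sum h (6*m) - 3 * dedekind_sum h m)
      = of_int (6 * E (3*m)) + of_int (9 * E (2*m)) + of_int (3 * E (6*m)) - 3 * of_int (18 * E m)"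
      using s1 s2 s3 s6 by (simp add: algebra_simps)
    then have "216*real_of_int m*(dedekind_sum h (3*m) + dedekind_sum h (2*m) + dedekind_sum h (6*m) - 3 * dedekind_sum h m)
            + 4 * of_int (h*(9-2*(6*m)^2) + hp*(-9-(6*m)^2))
        = of_int (-54*E m + 9*E (2*m) + 6*E (3*m) + 3*E (6*m) + 4*(h*(9-2*(6*m)^2) + hp*(-9-(6*m)^2)))"
      by simp
    also have "\<dots> = 432*real_of_int m * of_int j" unfolding j by simp
    finally show ?thesis by blast
  qed
qed
lemma exp_helper:
  fixes X :: real and J N D :: int
  assumes "D > 0" "of_int D * X + 2 * of_int N = 2 * of_int D * of_int J"
  shows "exp (of_real pi * \<i> * of_real X) = exp (- (2 * of_real pi * \<i> / of_int D) * of_int N)"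
proof -
  have D0: "real_of_int D \<noteq> 0" using assms(1) by simp
  have X: "X = 2 * of_int J - 2 * of_int N / of_int D"
    using assms(2) D0 by (simp add: field_simps)
  have "of_real pi * \<i> * complex_of_real X = complex_of_real (2 * of_int J * pi) * \<i> + (- (2 * of_real pi * \<i> / of_int D) * of_int N)"
    unfolding X using D0 by (simp add: field_simps)
  then have "exp (of_real pi * \<i> * complex_of_real X) = exp (complex_of_real (2 * of_int J * pi) * \<i>) * exp (- (2 * of_real pi * \<i> / of_int D) * of_int N)"
    by (metis exp_add)
  also have "exp (complex_of_real (2 * of_int J * pi) * \<i>) = 1"
    by (rule exp_integer_2pi) simp
  finally show ?thesis by simp
qed

lemma omega_prod1:
  "omega h a * omega h b * omega h c / omega h d
     = exp (of_real pi * \<i> * of_real (dedekind_sum h a + dedekind_sum h b + dedekind_sum h c - dedekind_sum h d))"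
  unfolding omega_def by (simp add: exp_add[symmetric] exp_diff[symmetric] algebra_simps)

lemma omega_prod2:
  "omega h a * omega h b * omega h c / (omega h d)^3
     = exp (of_real pi * \<i> * of_real (dedekind_sum h a + dedekind_sum h b + dedekind_sum h c - 3 * dedekind_sum h d))"
  unfolding omega_def power3_eq_cube by (simp add: exp_add[symmetric] exp_diff[symmetric] algebra_simps)
theorem lemma3p1:
  fixes k :: int and h h' :: int
  assumes "k > 0" and "6 dvd k" and "coprime h k"
    and "[h * h' = -1] (mod (36 * k))"
  shows "omega h (k div 6) * omega h (k div 2) * omega h k / omega h (k div 3)
           = exp (- (2 * of_real pi * \<i> / of_int (36 * k)) *
                 of_int (18 * k + h * (-9 - 9 * k - 4 * k^2) + h' * (9 - 2 * k^2)))
       \<and> omega h (k div 3) * omega h (k div 2) * omega h k / (omega h (k div 6))^3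
           = exp (- (2 * of_real pi * \<i> / of_int (18 * k)) *
                 of_int (h * (9 - 2 * k^2) + h' * (-9 - k^2)))"
proof -
  obtain m where km: "k = 6 * m" using assms(2) by (elim dvdE)
  have m0: "m > 0" using assms(1) km by simp
  have kd: "k div 6 = m" "k div 2 = 3 * m" "k div 3 = 2 * m" using km by simp_all
  define n where "n = 216 * m"
  have n0: "n > 0" using m0 n_def by simp
  define h0 where "h0 = h mod n"
  define c where "c = h div n"
  have hc: "h = h0 + n * c" unfolding h0_def c_def by simp
  have cp: "coprime (6*m) h" using assms(3) km by (simp add: coprime_commute)
  have cp0: "coprime (6*m) h0"
  proof (rule coprimeI)
    fix d assume d: "d dvd 6*m" "d dvd h0"
    have 6: "6*m dvd n" unfolding n_def by simp
    have "d dvd n" using d(1) 6 by (rule dvd_trans)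
    then have "d dvd h" using d(2) hc by simp
    then show "is_unit d" using cp d(1) by (rule coprime_common_divisor[rotated -1]) 
  qed
  have h0pos: "h0 > 0"
  proof -
    have "h0 \<ge> 0" unfolding h0_def using n0 by simp
    moreover have "h0 \<noteq> 0"
    proof
      assume "h0 = 0"
      then have "6*m dvd h0" by simp
      then have "is_unit (6*m)" using cp0 by (metis coprime_common_divisor dvd_refl)
      then show False using m0 by simp
    qed
    ultimately show ?thesis by simp
  qed
  have hh0: "[h0 * h' = -1] (mod (216*m))"
  proof -
    have "[h0 = h] (mod n)" unfolding h0_def Cong.cong_def by simp
    then have "[h0 * h' = h * h'] (mod n)" by (rule cong_mult) simp
    moreover have "[h * h' = -1] (mod n)" using assms(4) km n_def by (simp add: mult.assoc)
    ultimately show ?thesis unfolding n_def by (rule cong_trans)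
  qed
  have per: "dedekind_sum h K = dedekind_sum h0 K" if K0: "K > 0" and Kd: "K dvd n" for K
  proof -
    obtain e where e: "n = K * e" using Kd by (elim dvdE)
    have "h = h0 + K * (e * c)" using hc e by (simp add: algebra_simps)
    then show ?thesis using ds_periodic[OF K0, of h0 "e*c"] by simp
  qed
  have p1: "dedekind_sum h m = dedekind_sum h0 m" using per[of m] m0 unfolding n_def by simp
  have p2: "dedekind_sum h (2*m) = dedekind_sum h0 (2*m)"
  proof -
    have "2*m dvd n" unfolding n_def by (rule dvdI[of _ _ 108]) simp
    then show ?thesis using per[of "2*m"] m0 by simp
  qed
  have p3: "dedekind_sum h (3*m) = dedekind_sum h0 (3*m)"
  proof -
    have "3*m dvd n" unfolding n_def by (rule dvdI[of _ _ 72]) simp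
    then show ?thesis using per[of "3*m"] m0 by simp
  qed
  have p6: "dedekind_sum h (6*m) = dedekind_sum h0 (6*m)"
  proof -
    have "6*m dvd n" unfolding n_def by (rule dvdI[of _ _ 36]) simp
    then show ?thesis using per[of "6*m"] m0 by simp
  qed
  note cr = core[OF h0pos m0 cp0 hh0]
  obtain j1 where j1: "216 * real_of_int m * (dedekind_sum h0 m + dedekind_sum h0 (3*m) + dedekind_sum h0 (6*m) - dedekind_sum h0 (2*m))
            + 2 * of_int (18*(6*m) + h0*(-9-9*(6*m)-4*(6*m)^2) + h'*(9-2*(6*m)^2)) = 432 * real_of_int m * of_int j1"
    using cr(1) by blast
  obtain j2 where j2: "216 * real_of_int m * (dedekind_sum h0 (3*m) + dedekind_sum h0 (2*m) + dedekind_sum h0 (6*m) - 3 * dedekind_sum h0 m)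
            + 4 * of_int (h0*(9-2*(6*m)^2) + h'*(-9-(6*m)^2)) = 432 * real_of_int m * of_int j2"
    using cr(2) by blast
  define X1 where "X1 = dedekind_sum h m + dedekind_sum h (3*m) + dedekind_sum h (6*m) - dedekind_sum h (2*m)"
  define X2 where "X2 = dedekind_sum h (2*m) + dedekind_sum h (3*m) + dedekind_sum h (6*m) - 3 * dedekind_sum h m"
  define N1 where "N1 = 18 * k + h * (-9 - 9 * k - 4 * k^2) + h' * (9 - 2 * k^2)"
  define N2 where "N2 = h * (9 - 2 * k^2) + h' * (-9 - k^2)"
  have N1e: "N1 = (18*(6*m) + h0*(-9-9*(6*m)-4*(6*m)^2) + h'*(9-2*(6*m)^2)) + 216*m*(c*(-9-9*(6*m)-4*(6*m)^2))"
    unfolding N1_def km using hc n_def by (simp add: algebra_simps)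
  have N2e: "N2 = (h0*(9-2*(6*m)^2) + h'*(-9-(6*m)^2)) + 216*m*(c*(9-2*(6*m)^2))"
    unfolding N2_def km using hc n_def by (simp add: algebra_simps)
  have r1: "real_of_int (216*m) * X1 + 2 * of_int N1 = 2 * of_int (216*m) * of_int (j1 + c*(-9-9*(6*m)-4*(6*m)^2))"
  proof -
    have "216 * real_of_int m * X1 + 2 * of_int N1 = 432 * real_of_int m * of_int j1 + 2 * (216 * of_int m * of_int (c*(-9-9*(6*m)-4*(6*m)^2)))"
      using j1 unfolding X1_def N1e p1 p2 p3 p6 by (simp add: algebra_simps)
    then show ?thesis by (simp add: algebra_simps)
  qed
  have r2: "real_of_int (108*m) * X2 + 2 * of_int N2 = 2 * of_int (108*m) * of_int (j2 + 2*c*(9-2*(6*m)^2))"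
  proof -
    have "216 * real_of_int m * X2 + 4 * of_int N2 = 432 * real_of_int m * of_int j2 + 4 * (216 * of_int m * of_int (c*(9-2*(6*m)^2)))"
      using j2 unfolding X2_def N2e p1 p2 p3 p6 by (simp add: algebra_simps)
    then have "2 * (real_of_int (108*m) * X2 + 2 * of_int N2) = 2 * (2 * of_int (108*m) * of_int (j2 + 2*c*(9-2*(6*m)^2)))"
      by (simp add: algebra_simps)
    then show ?thesis by simp
  qed
  have e1: "exp (of_real pi * \<i> * of_real X1) = exp (- (2 * of_real pi * \<i> / of_int (216*m)) * of_int N1)"
    by (rule exp_helper[OF _ r1]) (use m0 in simp)
  have e2: "exp (of_real pi * \<i> * of_real X2) = exp (- (2 * of_real pi * \<i> / of_int (108*m)) * of_int N2)"
    by (rule exp_helper[OF _ r2]) (use m0 in simp)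
  have L1: "omega h (k div 6) * omega h (k div 2) * omega h k / omega h (k div 3) = exp (of_real pi * \<i> * of_real X1)"
    unfolding kd X1_def omega_prod1 km by simp
  have L2: "omega h (k div 3) * omega h (k div 2) * omega h k / (omega h (k div 6))^3 = exp (of_real pi * \<i> * of_real X2)"
    unfolding kd X2_def omega_prod2 km by simp
  have k1: "of_int (36 * k) = (of_int (216*m) :: complex)" "of_int (18 * k) = (of_int (108*m) :: complex)"
    using km by simp_all
  show ?thesis
    using e1 e2 unfolding L1 L2 k1 N1_def N2_def by simp
qed

end
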